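(* Let $\kappa$ be an uncountable cardinal, let $X$ be a set of cardinality at least $\kappa$, let $\Gamma$ be the group of all permutations of $X$ acting by application, and let $I_\kappa$ be the ideal of subsets of $X$ of cardinality less than $\kappa$. Then $\Gamma\curvearrowright X, I_\kappa$ is a simple dynamical ideal.
   Context: For a group $\Gamma$ acting on $X$ and $a\subseteq X$, $\mathrm{pstab}(a)=\{\gamma\in\Gamma:\gamma\cdot x=x\ \forall x\in a\}$. A dynamical ideal $\Gamma\curvearrowright X, I$ (a $\Gamma$-invariant ideal containing all singletons) is simple if for all $a\subseteq b$ in $I$, the only normal subgroup of $\mathrm{pstab}(a)$ containing $\mathrm{pstab}(b)$ is $\mathrm{pstab}(a)$ itself. *)

theory Defs
  imports "HOL-Algebra.Algebra" "HOL-Library.Equipollence"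
begin

definition pstab :: "('g, 'm) monoid_scheme \<Rightarrow> ('g \<Rightarrow> 'x \<Rightarrow> 'x) \<Rightarrow> 'x set \<Rightarrow> 'g set" where
  "pstab G \<phi> a = {g \<in> carrier G. \<forall>x\<in>a. \<phi> g x = x}"

definition set_ideal :: "'x set \<Rightarrow> 'x set set \<Rightarrow> bool" where
  "set_ideal S I \<longleftrightarrow> I \<subseteq> Pow S \<and> {} \<in> I \<and>
     (\<forall>a b. a \<in> I \<and> b \<subseteq> a \<longrightarrow> b \<in> I) \<and>
     (\<forall>a\<in>I. \<forall>b\<in>I. a \<union> b \<in> I)"

definition dynamical_ideal :: "('g, 'm) monoid_scheme \<Rightarrow> 'x set \<Rightarrow> ('g \<Rightarrow> 'x \<Rightarrow> 'x) \<Rightarrow> 'x set set \<Rightarrow> bool" where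
  "dynamical_ideal G S \<phi> I \<longleftrightarrow> group_action G S \<phi> \<and> set_ideal S I \<and>
     (\<forall>g\<in>carrier G. \<forall>a\<in>I. \<phi> g ` a \<in> I) \<and> (\<forall>x\<in>S. {x} \<in> I)"

definition simple_dynamical_ideal :: "('g, 'm) monoid_scheme \<Rightarrow> 'x set \<Rightarrow> ('g \<Rightarrow> 'x \<Rightarrow> 'x) \<Rightarrow> 'x set set \<Rightarrow> bool" where
  "simple_dynamical_ideal G S \<phi> I \<longleftrightarrow> dynamical_ideal G S \<phi> I \<and>
     (\<forall>a\<in>I. \<forall>b\<in>I. a \<subseteq> b \<longrightarrow>
        (\<forall>N. normal N (G\<lparr>carrier := pstab G \<phi> a\<rparr>) \<and> pstab G \<phi> b \<subseteq> N \<longrightarrow> N = pstab G \<phi> a))"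

end

theory Submission
  imports Defs
begin

lemma lesspoll_iff_ordLess: "lesspoll A B \<longleftrightarrow> |A| <o |B|"
proof
  assume "lesspoll A B"
  hence "\<not> lepoll B A" by (meson lepoll_antisym lesspoll_def)
  thus "|A| <o |B|" using card_of_ordLess[of B A] by (simp add: lepoll_def)
next
  assume h: "|A| <o |B|"
  hence 1: "\<not> lepoll B A" using card_of_ordLess[of B A] by (simp add: lepoll_def)
  have "|A| \<le>o |B|" using h by (rule ordLess_imp_ordLeq)
  hence 2: "lepoll A B" using card_of_ordLeq[of A B] by (simp add: lepoll_def)
  show "lesspoll A B" unfolding lesspoll_def using 1 2 by (meson eqpoll_sym eqpoll_imp_lepoll)
qed

lemma Un_lesspoll_inf:
  assumes "infinite C" "lesspoll A C" "lesspoll B C" shows "lesspoll (A \<union> B) C"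
proof -
  have "|A \<union> B| <o |C|"
    using card_of_Un_ordLess_infinite assms(1) assms(2,3)[unfolded lesspoll_iff_ordLess] by blast
  thus ?thesis by (simp add: lesspoll_iff_ordLess)
qed

lemma not_lesspoll_lepoll:
  assumes "\<not> lesspoll A K" shows "lepoll K A"
proof -
  have "\<not> |A| <o |K|" using assms by (simp add: lesspoll_iff_ordLess)
  hence "|K| \<le>o |A|" using not_ordLess_iff_ordLeq[OF card_of_Well_order card_of_Well_order] by blast
  thus ?thesis using card_of_ordLeq[of K A] by (simp add: lepoll_def)
qed

definition swp :: "'a set \<Rightarrow> 'a set \<Rightarrow> 'a set \<Rightarrow> ('a \<Rightarrow> 'a) \<Rightarrow> 'a \<Rightarrow> 'a" where
  "swp S P Q f = (\<lambda>x\<in>S. if x \<in> P then f x else if x \<in> Q then inv_into P f x else x)"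

locale swpl =
  fixes S P Q f
  assumes PS: "P \<subseteq> S" and QS: "Q \<subseteq> S" and PQ: "P \<inter> Q = {}" and bf: "bij_betw f P Q"
begin

lemma fP: "x \<in> P \<Longrightarrow> f x \<in> Q" by (rule bij_betw_apply[OF bf])
lemma iQ: "y \<in> Q \<Longrightarrow> inv_into P f y \<in> P"
  by (rule bij_betw_apply[OF bij_betw_inv_into[OF bf]])
lemma if1: "x \<in> P \<Longrightarrow> inv_into P f (f x) = x"
  by (rule bij_betw_inv_into_left[OF bf])
lemma if2: "y \<in> Q \<Longrightarrow> f (inv_into P f y) = y"
  by (rule bij_betw_inv_into_right[OF bf])

lemma onP: "x \<in> P \<Longrightarrow> swp S P Q f x = f x" using PS by (auto simp: swp_def)
lemma onQ: "y \<in> Q \<Longrightarrow> swp S P Q f y = inv_into P f y" using QS PQ by (auto simp: swp_def)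
lemma off: "x \<in> S \<Longrightarrow> x \<notin> P \<Longrightarrow> x \<notin> Q \<Longrightarrow> swp S P Q f x = x" by (auto simp: swp_def)

lemma invol: "x \<in> S \<Longrightarrow> swp S P Q f (swp S P Q f x) = x"
proof -
  assume x: "x \<in> S"
  show ?thesis
  proof (cases "x \<in> P")
    case True thus ?thesis using onP onQ fP if1 by simp
  next
    case False
    show ?thesis
    proof (cases "x \<in> Q")
      case True thus ?thesis using onP onQ iQ if2 False by simp
    next
      case False2: False thus ?thesis using off x False by simp
    qed
  qed
qed

lemma maps: "x \<in> S \<Longrightarrow> swp S P Q f x \<in> S"
  using PS QS fP iQ by (auto simp: swp_def)

lemma Bij: "swp S P Q f \<in> Bij S"
proof -
  have a1: "\<forall>x\<in>S. swp S P Q f (swp S P Q f x) = x" using invol by blast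
  have a2: "swp S P Q f ` S \<subseteq> S" using maps by blast
  have "bij_betw (swp S P Q f) S S"
    using bij_betw_byWitness[OF a1 a1 a2 a2] .
  moreover have "swp S P Q f \<in> extensional S" unfolding swp_def by (rule restrict_extensional)
  ultimately show ?thesis unfolding Bij_def by blast
qed

lemma sq: "swp S P Q f \<otimes>\<^bsub>BijGroup S\<^esub> swp S P Q f = \<one>\<^bsub>BijGroup S\<^esub>"
proof -
  have "swp S P Q f \<otimes>\<^bsub>BijGroup S\<^esub> swp S P Q f = compose S (swp S P Q f) (swp S P Q f)"
    using Bij by (simp add: BijGroup_def)
  also have "\<dots> = (\<lambda>x\<in>S. x)"
  proof
    fix x show "compose S (swp S P Q f) (swp S P Q f) x = (\<lambda>x\<in>S. x) x"
      by (cases "x \<in> S") (simp_all add: compose_def invol)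
  qed
  also have "\<dots> = \<one>\<^bsub>BijGroup S\<^esub>" by (simp add: BijGroup_def)
  finally show ?thesis .
qed

end

lemma mult_apply: "f \<in> Bij S \<Longrightarrow> g \<in> Bij S \<Longrightarrow> x \<in> S \<Longrightarrow> (f \<otimes>\<^bsub>BijGroup S\<^esub> g) x = f (g x)"
  by (simp add: BijGroup_def compose_def)

lemma pstab_eq: "pstab (BijGroup S) (\<lambda>g. g) a = {g \<in> Bij S. \<forall>x\<in>a. g x = x}"
  by (simp add: pstab_def BijGroup_def)

lemma group_action_Bij: "group_action (BijGroup S) S (\<lambda>g. g)"
  unfolding group_action_def group_hom_def group_hom_axioms_def
  using group_BijGroup by (simp add: hom_def Pi_def)

lemma simple_part:
  fixes S :: "'a set" and K :: "'b set"
  assumes infK: "infinite K" and KS: "lepoll K S"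
    and aS: "a \<subseteq> S" and bS: "b \<subseteq> S" and aK: "lesspoll a K" and bK: "lesspoll b K"
    and ab: "a \<subseteq> b"
    and N: "normal N ((BijGroup S)\<lparr>carrier := pstab (BijGroup S) (\<lambda>g. g) a\<rparr>)"
    and Nb: "pstab (BijGroup S) (\<lambda>g. g) b \<subseteq> N"
  shows "N = pstab (BijGroup S) (\<lambda>g. g) a"
proof -
  let ?G = "BijGroup S"
  let ?H = "?G\<lparr>carrier := pstab ?G (\<lambda>g. g) a\<rparr>"
  interpret G: group ?G by (rule group_BijGroup)
  interpret N: normal N ?H by (rule N)
  define c where "c = b - a"
  have bac: "b = a \<union> c" using ab c_def by auto
  have cS: "c \<subseteq> S" using bS c_def by auto
  have cK: "lesspoll c K" using bK c_def lesspoll_trans1 subset_imp_lepoll by blast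
  have pa: "pstab ?G (\<lambda>g. g) a = {g \<in> Bij S. \<forall>x\<in>a. g x = x}" by (rule pstab_eq)
  have pb: "pstab ?G (\<lambda>g. g) b = {g \<in> Bij S. \<forall>x\<in>b. g x = x}" by (rule pstab_eq)
  have carG: "carrier ?G = Bij S" by (simp add: BijGroup_def)
  have room: "\<exists>E f. E \<subseteq> S - D \<and> bij_betw f c E" if D: "lesspoll D K" for D :: "'a set"
  proof -
    have "\<not> lesspoll (S - D) K"
    proof
      assume "lesspoll (S - D) K"
      hence "lesspoll (D \<union> (S - D)) K" using Un_lesspoll_inf infK D by blast
      hence "lesspoll S K" using lesspoll_trans1 subset_imp_lepoll[of S "D \<union> (S - D)"] by blast
      thus False using KS lepoll_antisym lesspoll_def
        by (metis lesspoll_trans2 lesspoll_not_refl)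
    qed
    hence "lepoll K (S - D)" by (rule not_lesspoll_lepoll)
    hence "lepoll c (S - D)" using cK lesspoll_imp_lepoll lepoll_trans by blast
    then obtain f where "inj_on f c" "f ` c \<subseteq> S - D" unfolding lepoll_def by blast
    thus ?thesis unfolding bij_betw_def by blast
  qed
  have L: "h \<in> N" if h: "h \<in> pstab ?G (\<lambda>g. g) a" and E: "E \<subseteq> S - b" and f: "bij_betw f c E"
    and hE: "\<forall>x\<in>E. h x = x" for h E f
  proof -
    interpret sw: swpl S c E f using cS E f c_def by unfold_locales auto
    define \<sigma> where "\<sigma> = swp S c E f"
    have sB: "\<sigma> \<in> Bij S" using sw.Bij \<sigma>_def by simp
    have hB: "h \<in> Bij S" using h pa by auto
    have sfix: "\<sigma> x = x" if "x \<in> a" for x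
    proof -
      have "x \<in> S" "x \<notin> c" "x \<notin> E" using that aS E c_def ab by auto
      thus ?thesis using sw.off \<sigma>_def by simp
    qed
    have sa: "\<sigma> \<in> pstab ?G (\<lambda>g. g) a" using pa sB sfix by auto
    define q where "q = \<sigma> \<otimes>\<^bsub>?G\<^esub> h \<otimes>\<^bsub>?G\<^esub> \<sigma>"
    have qB: "q \<in> Bij S" using q_def sB hB G.m_closed carG by auto
    have shB: "\<sigma> \<otimes>\<^bsub>?G\<^esub> h \<in> Bij S" using sB hB G.m_closed carG by auto
    have qx: "q x = \<sigma> (h (\<sigma> x))" if "x \<in> S" for x
      using q_def mult_apply[OF shB sB that] mult_apply[OF sB hB] sw.maps that \<sigma>_def by simp
    have "q \<in> pstab ?G (\<lambda>g. g) b"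
    proof -
      have "q x = x" if "x \<in> b" for x
      proof (cases "x \<in> a")
        case True thus ?thesis using qx aS sfix h pa by auto
      next
        case False
        hence xc: "x \<in> c" using that c_def by auto
        have fx: "f x \<in> E" using sw.fP xc by auto
        have "\<sigma> x = f x" using sw.onP xc \<sigma>_def by simp
        moreover have "h (f x) = f x" using hE fx by auto
        moreover have "\<sigma> (f x) = x" using sw.onQ fx sw.if1 xc \<sigma>_def by simp
        ultimately show ?thesis using qx xc cS by auto
      qed
      thus ?thesis using pb qB by auto
    qed
    hence qN: "q \<in> N" using Nb by auto
    have "\<sigma> \<otimes>\<^bsub>?H\<^esub> q \<otimes>\<^bsub>?H\<^esub> inv\<^bsub>?H\<^esub> \<sigma> \<in> N"
      using N.inv_op_closed2 sa qN by simp
    moreover have "inv\<^bsub>?H\<^esub> \<sigma> = \<sigma>"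
      using N.inv_equality[of \<sigma> \<sigma>] sa sw.sq \<sigma>_def by simp
    moreover have "\<sigma> \<otimes>\<^bsub>?G\<^esub> q \<otimes>\<^bsub>?G\<^esub> \<sigma> = h"
    proof -
      have ss: "\<sigma> \<otimes>\<^bsub>?G\<^esub> \<sigma> = \<one>\<^bsub>?G\<^esub>" using sw.sq \<sigma>_def by simp
      have sC: "\<sigma> \<in> carrier ?G" and hC: "h \<in> carrier ?G" using sB hB carG by auto
      have "\<sigma> \<otimes>\<^bsub>?G\<^esub> q \<otimes>\<^bsub>?G\<^esub> \<sigma> = (\<sigma> \<otimes>\<^bsub>?G\<^esub> \<sigma>) \<otimes>\<^bsub>?G\<^esub> h \<otimes>\<^bsub>?G\<^esub> (\<sigma> \<otimes>\<^bsub>?G\<^esub> \<sigma>)"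
        using sC hC q_def G.m_assoc G.m_closed by simp
      thus ?thesis using ss hC by simp
    qed
    ultimately show ?thesis by simp
  qed
  show ?thesis
  proof
    show "N \<subseteq> pstab ?G (\<lambda>g. g) a" using N.subset by simp
  next
    show "pstab ?G (\<lambda>g. g) a \<subseteq> N"
    proof
      fix g assume g: "g \<in> pstab ?G (\<lambda>g. g) a"
      have gB: "g \<in> Bij S" and ga: "\<forall>x\<in>a. g x = x" using g pa by auto
      have ginj: "inj_on g S" using gB by (auto simp: Bij_def bij_betw_def)
      have gcS: "g ` c \<subseteq> S" using gB cS by (auto simp: Bij_def bij_betw_def)
      have gcK: "lesspoll (g ` c) K" using cK image_lepoll lesspoll_trans1 by blast
      have gca: "g ` c \<inter> a = {}"
      proof (rule ccontr)
        assume "g ` c \<inter> a \<noteq> {}"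
        then obtain y where y: "y \<in> c" "g y \<in> a" by auto
        hence "g (g y) = g y" using ga by auto
        hence "g y = y" using ginj y cS aS by (meson inj_on_def subsetD)
        thus False using y c_def by auto
      qed
      obtain E f1 where E: "E \<subseteq> S - (b \<union> g ` c)" and f1: "bij_betw f1 c E"
        using room[of "b \<union> g ` c"] Un_lesspoll_inf[OF infK bK gcK] by blast
      have EK: "lesspoll E K" using f1 cK bij_betw_imp_surj_on image_lepoll lesspoll_trans1 by metis
      obtain E1 f2 where E1: "E1 \<subseteq> S - (b \<union> E)" and f2: "bij_betw f2 c E1"
        using room[of "b \<union> E"] Un_lesspoll_inf[OF infK bK EK] by blast
      obtain E2 f3 where E2: "E2 \<subseteq> S - (b \<union> E \<union> g ` c)" and f3: "bij_betw f3 c E2"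
        using room[of "b \<union> E \<union> g ` c"] Un_lesspoll_inf[OF infK Un_lesspoll_inf[OF infK bK EK] gcK] by blast
      interpret s1: swpl S c E f1 using cS E f1 c_def by unfold_locales auto
      define h2 where "h2 = g \<circ> inv_into c f1"
      have bh2: "bij_betw h2 E (g ` c)"
        unfolding h2_def
        by (rule bij_betw_trans[OF bij_betw_inv_into[OF f1]])
           (use ginj cS in \<open>auto simp: bij_betw_def intro: inj_on_subset\<close>)
      interpret s2: swpl S E "g ` c" h2 using E gcS bh2 by unfold_locales auto
      define k1 where "k1 = swp S c E f1"
      define k2 where "k2 = swp S E (g ` c) h2"
      have k1B: "k1 \<in> Bij S" using s1.Bij k1_def by simp
      have k2B: "k2 \<in> Bij S" using s2.Bij k2_def by simp
      have k1a: "k1 x = x" if "x \<in> a" for x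
      proof -
        have "x \<in> S" "x \<notin> c" "x \<notin> E" using that aS E c_def ab by auto
        thus ?thesis using s1.off k1_def by simp
      qed
      have k2a: "k2 x = x" if "x \<in> a" for x
      proof -
        have "x \<in> S" "x \<notin> g ` c" "x \<notin> E" using that aS E gca ab by auto
        thus ?thesis using s2.off k2_def by simp
      qed
      have k1p: "k1 \<in> pstab ?G (\<lambda>g. g) a" using k1B k1a pa by auto
      have k2p: "k2 \<in> pstab ?G (\<lambda>g. g) a" using k2B k2a pa by auto
      have k1N: "k1 \<in> N"
      proof (rule L[OF k1p _ f2])
        show "E1 \<subseteq> S - b" using E1 by auto
        show "\<forall>x\<in>E1. k1 x = x" using s1.off E1 c_def k1_def by auto
      qed
      have k2N: "k2 \<in> N"
      proof (rule L[OF k2p _ f3])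
        show "E2 \<subseteq> S - b" using E2 by auto
        show "\<forall>x\<in>E2. k2 x = x" using s2.off E2 k2_def by auto
      qed
      define p where "p = k1 \<otimes>\<^bsub>?G\<^esub> k2 \<otimes>\<^bsub>?G\<^esub> g"
      have k12B: "k1 \<otimes>\<^bsub>?G\<^esub> k2 \<in> Bij S" using k1B k2B G.m_closed carG by auto
      have pB: "p \<in> Bij S" using p_def k12B gB G.m_closed carG by auto
      have px: "p x = k1 (k2 (g x))" if "x \<in> S" for x
      proof -
        have "g x \<in> S" using gB that by (auto simp: Bij_def bij_betw_def)
        thus ?thesis using p_def mult_apply[OF k12B gB that] mult_apply[OF k1B k2B] by simp
      qed
      have "p \<in> pstab ?G (\<lambda>g. g) b"
      proof -
        have "p x = x" if "x \<in> b" for x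
        proof (cases "x \<in> a")
          case True thus ?thesis using px aS ga k1a k2a by auto
        next
          case False
          hence xc: "x \<in> c" using that c_def by auto
          have f1x: "f1 x \<in> E" using s1.fP xc by auto
          have h2f: "h2 (f1 x) = g x" using h2_def s1.if1 xc by simp
          have "k2 (g x) = f1 x"
            using s2.onQ[of "g x"] xc s2.if1[OF f1x] h2f k2_def by auto
          moreover have "k1 (f1 x) = x" using s1.onQ f1x s1.if1 xc k1_def by simp
          ultimately show ?thesis using px xc cS by auto
        qed
        thus ?thesis using pb pB by auto
      qed
      hence pN: "p \<in> N" using Nb by auto
      have "g = k2 \<otimes>\<^bsub>?G\<^esub> (k1 \<otimes>\<^bsub>?G\<^esub> p)"
      proof -
        have s1': "k1 \<otimes>\<^bsub>?G\<^esub> k1 = \<one>\<^bsub>?G\<^esub>" using s1.sq k1_def by simp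
        have s2': "k2 \<otimes>\<^bsub>?G\<^esub> k2 = \<one>\<^bsub>?G\<^esub>" using s2.sq k2_def by simp
        have C: "k1 \<in> carrier ?G" "k2 \<in> carrier ?G" "g \<in> carrier ?G" using k1B k2B gB carG by auto
        have "k2 \<otimes>\<^bsub>?G\<^esub> (k1 \<otimes>\<^bsub>?G\<^esub> p) = k2 \<otimes>\<^bsub>?G\<^esub> ((k1 \<otimes>\<^bsub>?G\<^esub> k1) \<otimes>\<^bsub>?G\<^esub> (k2 \<otimes>\<^bsub>?G\<^esub> g))"
          using C p_def G.m_assoc G.m_closed by simp
        also have "\<dots> = (k2 \<otimes>\<^bsub>?G\<^esub> k2) \<otimes>\<^bsub>?G\<^esub> g" using s1' C G.m_assoc by simp
        also have "\<dots> = g" using s2' C by simp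
        finally show ?thesis by simp
      qed
      moreover have "k2 \<otimes>\<^bsub>?H\<^esub> (k1 \<otimes>\<^bsub>?H\<^esub> p) \<in> N" using k1N k2N pN N.m_closed by blast
      ultimately show "g \<in> N" by simp
    qed
  qed
qed

theorem mainTheorem16:
  fixes S :: "'a set" and K :: "'b set"
  assumes "\<not> countable K"
    and "K \<lesssim> S"
  shows "simple_dynamical_ideal (BijGroup S) S (\<lambda>g. g) {a. a \<subseteq> S \<and> a \<prec> K}"
proof -
  have infK: "infinite K" using assms(1) countable_finite by blast
  have KS: "lepoll K S" using assms(2) by simp
  have ne: "lesspoll {} K"
    using infK finite_lesspoll_infinite by blast
  have si: "set_ideal S {a. a \<subseteq> S \<and> lesspoll a K}"
    unfolding set_ideal_def
    using ne Un_lesspoll_inf[OF infK] lesspoll_trans1 subset_imp_lepoll by blast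
  have inv: "\<forall>g\<in>carrier (BijGroup S). \<forall>a\<in>{a. a \<subseteq> S \<and> lesspoll a K}. g ` a \<in> {a. a \<subseteq> S \<and> lesspoll a K}"
  proof (intro ballI)
    fix g a assume g: "g \<in> carrier (BijGroup S)" and a: "a \<in> {a. a \<subseteq> S \<and> lesspoll a K}"
    have "g ` a \<subseteq> S" using g a by (auto simp: BijGroup_def Bij_def bij_betw_def)
    moreover have "lesspoll (g ` a) K" using a image_lepoll lesspoll_trans1 by blast
    ultimately show "g ` a \<in> {a. a \<subseteq> S \<and> lesspoll a K}" by simp
  qed
  have sing: "\<forall>x\<in>S. {x} \<in> {a. a \<subseteq> S \<and> lesspoll a K}"
    using infK finite_lesspoll_infinite by blast
  have sp: "\<forall>a\<in>{a. a \<subseteq> S \<and> lesspoll a K}. \<forall>b\<in>{a. a \<subseteq> S \<and> lesspoll a K}. a \<subseteq> b \<longrightarrow>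
        (\<forall>N. normal N ((BijGroup S)\<lparr>carrier := pstab (BijGroup S) (\<lambda>g. g) a\<rparr>) \<and>
           pstab (BijGroup S) (\<lambda>g. g) b \<subseteq> N \<longrightarrow> N = pstab (BijGroup S) (\<lambda>g. g) a)"
  proof (intro ballI impI allI)
    fix a b N
    assume a: "a \<in> {a. a \<subseteq> S \<and> lesspoll a K}" and b: "b \<in> {a. a \<subseteq> S \<and> lesspoll a K}"
      and ab: "a \<subseteq> b"
      and NN: "normal N ((BijGroup S)\<lparr>carrier := pstab (BijGroup S) (\<lambda>g. g) a\<rparr>) \<and>
           pstab (BijGroup S) (\<lambda>g. g) b \<subseteq> N"
    have a1: "a \<subseteq> S" "lesspoll a K" using a by auto
    have b1: "b \<subseteq> S" "lesspoll b K" using b by auto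
    show "N = pstab (BijGroup S) (\<lambda>g. g) a"
      using simple_part[OF infK KS a1(1) b1(1) a1(2) b1(2) ab] NN by blast
  qed
  show ?thesis
    unfolding simple_dynamical_ideal_def dynamical_ideal_def
    using group_action_Bij si inv sing sp by blast
qed

end
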